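(* Protocol $\Pi_{4PC}$ (described in the context) is correct: for every wire of the circuit, the parties hold a $[\![\cdot]\!]$-sharing of the value carried by that wire when the circuit is evaluated on the parties' inputs, so that the values reconstructed at the output wires equal the outputs of the circuit on those inputs.
   Context: Four parties $P_0,P_1,P_2,P_3$ are connected by pairwise private and authentic channels in a synchronous network. The function is given as a publicly known circuit over the ring $\mathbb{Z}_{2^\ell}$ made of 2-input addition and multiplication gates. Parties have pre-shared PRF keys for every subset of parties, so any subset can non-interactively sample common random values; $H$ is a collision-resistant hash function. Sharings over $\mathbb{Z}_{2^\ell}$: a value $v$ is $\langle\cdot\rangle$-shared among $P_1,P_2,P_3$ if $v=v_1+v_2+v_3$ and $P_1$ holds $(v_2,v_3)$, $P_2$ holds $(v_3,v_1)$, $P_3$ holds $(v_1,v_2)$. A value $v$ is $[\![\cdot]\!]$-shared if there are $\lambda_v,m_v$ with $m_v=v+\lambda_v$, $P_1,P_2,P_3$ all know $m_v$, $\lambda_v=\lambda_{v,1}+\lambda_{v,2}+\lambda_{v,3}$ is $\langle\cdot\rangle$-shared among $P_1,P_2,P_3$, and $P_0$ knows $\lambda_{v,1},\lambda_{v,2},\lambda_{v,3}$. Protocol $\Pi_{4PC}$: (1) Input sharing: for an input $v$ of party $P_i$, offline the $\lambda_{v,j}$ are sampled non-interactively so that $\lambda_{v,j}$ is known to all parties except $P_j$ ($j\in\{1,2,3\}$), and additionally known to $P_i$ (if $P_i=P_k$, $k\in\{1,2,3\}$, $\lambda_{v,k}$ is sampled by all four parties); online $P_i$ sends $m_v=v+\lambda_v$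 to $P_1,P_2,P_3$, who exchange $H(m_v)$ and abort on mismatch. (2) Addition gates are evaluated locally by linearity. (3) Multiplication gate $z=xy$: offline, $\lambda_{z,j}$ is sampled by all parties but $P_j$; the parties obtain $A,B,\Gamma$ with $A+B+\Gamma=0$, where $P_0,P_1$ know $A$, $P_0,P_2$ know $B$, $P_0,P_3$ know $\Gamma$; $P_0,P_1$ compute $\gamma_2=\lambda_{x,2}\lambda_{y,2}+\lambda_{x,2}\lambda_{y,3}+\lambda_{x,3}\lambda_{y,2}+A$, $P_0,P_2$ compute $\gamma_3=\lambda_{x,3}\lambda_{y,3}+\lambda_{x,3}\lambda_{y,1}+\lambda_{x,1}\lambda_{y,3}+B$, $P_0,P_3$ compute $\gamma_1=\lambda_{x,1}\lambda_{y,1}+\lambda_{x,1}\lambda_{y,2}+\lambda_{x,2}\lambda_{y,1}+\Gamma$; $P_1$ receives $\gamma_3$ from $P_2$ and $H(\gamma_3)$ from $P_0$, $P_2$ receives $\gamma_1$ from $P_3$ and $H(\gamma_1)$ from $P_0$, $P_3$ receives $\gamma_2$ from $P_1$ and $H(\gamma_2)$ from $P_0$, aborting on inconsistency. Online, $P_1,P_3$ compute $m'_2=-\lambda_{x,2}m_y-\lambda_{y,2}m_x+\gamma_2+\lambda_{z,2}$, $P_2,P_1$ compute $m'_3=-\lambda_{x,3}m_y-\lambda_{y,3}m_x+\gamma_3+\lambda_{z,3}$, $P_3,P_2$ compute $m'_1=-\lambda_{x,1}m_y-\lambda_{y,1}m_x+\gamma_1+\lambda_{z,1}$; $P_1$ receives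 $m'_1$ from $P_2$ and $H(m'_1)$ from $P_3$, $P_2$ receives $m'_2$ from $P_3$ and $H(m'_2)$ from $P_1$, $P_3$ receives $m'_3$ from $P_1$ and $H(m'_3)$ from $P_2$; they abort on inconsistency, else set $m_z=m'_1+m'_2+m'_3+m_xm_y$. (4) Output reconstruction of $v$: $P_1$ receives $\lambda_{v,1}$ from $P_2$ and its hash from $P_0$; $P_2$ receives $\lambda_{v,2}$ from $P_3$ and its hash from $P_0$; $P_3$ receives $\lambda_{v,3}$ from $P_1$ and its hash from $P_0$; $P_0$ receives $m_v$ from $P_1$ and its hash from $P_2$; each party aborts on inconsistency, else outputs $v=m_v-\lambda_{v,1}-\lambda_{v,2}-\lambda_{v,3}$. *)

theory Defs
  imports "HOL-Library.Word"
begin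

text \<open>The ring Z_{2^l} is modelled by the type 'l word (l = LENGTH('l)).
  A circuit is a straight-line list of gates; wire w is the output of gate w.
  Gates refer to earlier wires only (see wf_circ).\<close>

datatype gate = Inp nat | AddG nat nat | MulG nat nat
  (* Inp p : input wire owned by party P_p; AddG/MulG i j : gate on wires i, j *)

definition wf_circ :: "gate list \<Rightarrow> bool" where
  "wf_circ C \<longleftrightarrow> (\<forall>w<length C. case C ! w of
      Inp p \<Rightarrow> p \<le> 3
    | AddG i j \<Rightarrow> i < w \<and> j < w
    | MulG i j \<Rightarrow> i < w \<and> j < w)"

definition eval_step :: "(nat \<Rightarrow> 'l::len word) \<Rightarrow> 'l word list \<Rightarrow> gate \<Rightarrow> 'l word list" where
  "eval_step x vs g = vs @ [case g of
      Inp p \<Rightarrow> x (length vs)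
    | AddG i j \<Rightarrow> vs ! i + vs ! j
    | MulG i j \<Rightarrow> vs ! i * vs ! j]"

definition eval_circ :: "gate list \<Rightarrow> (nat \<Rightarrow> 'l::len word) \<Rightarrow> 'l word list" where
  "eval_circ C x = foldl (eval_step x) [] C"

text \<open>Local state of the four parties for one wire v.
  P0 holds (lambda_{v,1}, lambda_{v,2}, lambda_{v,3});
  P1 holds (m_v, lambda_{v,2}, lambda_{v,3});
  P2 holds (m_v, lambda_{v,3}, lambda_{v,1});
  P3 holds (m_v, lambda_{v,1}, lambda_{v,2}),
  each as computed by that party from its own data and received messages.\<close>
type_synonym 'l pst = "'l word \<times> 'l word \<times> 'l word"
type_synonym 'l wst = "'l pst \<times> 'l pst \<times> 'l pst \<times> 'l pst"

definition is_sharing :: "'l::len wst \<Rightarrow> 'l word \<Rightarrow> bool" where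
  "is_sharing st v \<longleftrightarrow> (\<exists>m l1 l2 l3. m = v + (l1 + l2 + l3) \<and>
      st = ((l1, l2, l3), (m, l2, l3), (m, l3, l1), (m, l1, l2)))"

fun add_pst :: "'l::len pst \<Rightarrow> 'l pst \<Rightarrow> 'l pst" where
  "add_pst (a, b, c) (a', b', c') = (a + a', b + b', c + c')"

text \<open>Honest execution of one gate (wire w = length sts).
  r w j : the common PRF value lambda_{w,j} (sampled by all parties but P_j,
          or by all four parties for the owner's index at input wires);
  rA w, rB w : the values A, B of a multiplication gate (Gamma = -A-B);
  H : the hash function. Returns new state and the set of aborting parties.\<close>
definition prot_gate :: "(nat \<Rightarrow> nat \<Rightarrow> 'l::len word) \<Rightarrow> (nat \<Rightarrow> 'l word) \<Rightarrow> (nat \<Rightarrow> 'l word)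
    \<Rightarrow> ('l word \<Rightarrow> 'h) \<Rightarrow> (nat \<Rightarrow> 'l word) \<Rightarrow> 'l wst list \<Rightarrow> gate \<Rightarrow> 'l wst \<times> nat set" where
  "prot_gate r rA rB H x sts g = (let w = length sts in case g of
     Inp p \<Rightarrow>
       (let l1 = r w 1; l2 = r w 2; l3 = r w 3;
            m = x w + (l1 + l2 + l3);   \<comment> \<open>computed by owner P_p, sent to P1,P2,P3\<close>
            m1 = m; m2 = m; m3 = m;     \<comment> \<open>values received by P1, P2, P3\<close>
            rc = (\<lambda>i::nat. if i = 1 then m1 else if i = 2 then m2 else m3);
            ab = {i\<in>{1,2,3}. \<exists>j\<in>{1,2,3}. H (rc i) \<noteq> H (rc j)}
        in (((l1, l2, l3), (m1, l2, l3), (m2, l3, l1), (m3, l1, l2)), ab))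
   | AddG i j \<Rightarrow>
       (let (a0, a1, a2, a3) = sts ! i; (b0, b1, b2, b3) = sts ! j
        in ((add_pst a0 b0, add_pst a1 b1, add_pst a2 b2, add_pst a3 b3), {}))
   | MulG i j \<Rightarrow>
       (let ((x1, x2, x3), (mxP1, x2P1, x3P1), (mxP2, x3P2, x1P2), (mxP3, x1P3, x2P3)) = sts ! i;
            ((y1, y2, y3), (myP1, y2P1, y3P1), (myP2, y3P2, y1P2), (myP3, y1P3, y2P3)) = sts ! j;
            z1 = r w 1; z2 = r w 2; z3 = r w 3;
            A = rA w; B = rB w; G = - A - B;
            \<comment> \<open>offline: gamma values as computed by the respective parties\<close>
            g2P0 = x2 * y2 + x2 * y3 + x3 * y2 + A;
            g2P1 = x2P1 * y2P1 + x2P1 * y3P1 + x3P1 * y2P1 + A;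
            g3P0 = x3 * y3 + x3 * y1 + x1 * y3 + B;
            g3P2 = x3P2 * y3P2 + x3P2 * y1P2 + x1P2 * y3P2 + B;
            g1P0 = x1 * y1 + x1 * y2 + x2 * y1 + G;
            g1P3 = x1P3 * y1P3 + x1P3 * y2P3 + x2P3 * y1P3 + G;
            \<comment> \<open>P1 gets gamma3 from P2 (hash from P0), P2 gets gamma1 from P3, P3 gets gamma2 from P1\<close>
            g3atP1 = g3P2; g1atP2 = g1P3; g2atP3 = g2P1;
            ab_off = {p. (p = 1 \<and> H g3atP1 \<noteq> H g3P0) \<or> (p = 2 \<and> H g1atP2 \<noteq> H g1P0)
                         \<or> (p = 3 \<and> H g2atP3 \<noteq> H g2P0)};
            \<comment> \<open>online\<close>
            m2P1 = - x2P1 * myP1 - y2P1 * mxP1 + g2P1 + z2;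
            m2P3 = - x2P3 * myP3 - y2P3 * mxP3 + g2atP3 + z2;
            m3P2 = - x3P2 * myP2 - y3P2 * mxP2 + g3P2 + z3;
            m3P1 = - x3P1 * myP1 - y3P1 * mxP1 + g3atP1 + z3;
            m1P3 = - x1P3 * myP3 - y1P3 * mxP3 + g1P3 + z1;
            m1P2 = - x1P2 * myP2 - y1P2 * mxP2 + g1atP2 + z1;
            \<comment> \<open>P1 gets m'1 from P2 (hash from P3), P2 gets m'2 from P3 (hash from P1),
                P3 gets m'3 from P1 (hash from P2)\<close>
            m1atP1 = m1P2; m2atP2 = m2P3; m3atP3 = m3P1;
            ab_on = {p. (p = 1 \<and> H m1atP1 \<noteq> H m1P3) \<or> (p = 2 \<and> H m2atP2 \<noteq> H m2P1)
                        \<or> (p = 3 \<and> H m3atP3 \<noteq> H m3P2)};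
            mzP1 = m1atP1 + m2P1 + m3P1 + mxP1 * myP1;
            mzP2 = m1P2 + m2atP2 + m3P2 + mxP2 * myP2;
            mzP3 = m1P3 + m2P3 + m3atP3 + mxP3 * myP3
        in (((z1, z2, z3), (mzP1, z2, z3), (mzP2, z3, z1), (mzP3, z1, z2)), ab_off \<union> ab_on)))"

definition prot_step where
  "prot_step r rA rB H x acc g =
     (let (sts, ab) = acc; (st, ab') = prot_gate r rA rB H x sts g in (sts @ [st], ab \<union> ab'))"

definition prot_run :: "(nat \<Rightarrow> nat \<Rightarrow> 'l::len word) \<Rightarrow> (nat \<Rightarrow> 'l word) \<Rightarrow> (nat \<Rightarrow> 'l word)
    \<Rightarrow> ('l word \<Rightarrow> 'h) \<Rightarrow> (nat \<Rightarrow> 'l word) \<Rightarrow> gate list \<Rightarrow> 'l wst list \<times> nat set" where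
  "prot_run r rA rB H x C = foldl (prot_step r rA rB H x) ([], {}) C"

text \<open>Output reconstruction of wire state st by party p; None means abort.\<close>
definition prot_output :: "('l::len word \<Rightarrow> 'h) \<Rightarrow> 'l wst \<Rightarrow> nat \<Rightarrow> 'l word option" where
  "prot_output H st p = (let ((l1, l2, l3), (mP1, l2P1, l3P1), (mP2, l3P2, l1P2), (mP3, l1P3, l2P3)) = st in
     if p = 0 then (let mr = mP1 in if H mr \<noteq> H mP2 then None else Some (mr - l1 - l2 - l3))
     else if p = 1 then (let lr = l1P2 in if H lr \<noteq> H l1 then None else Some (mP1 - lr - l2P1 - l3P1))
     else if p = 2 then (let lr = l2P3 in if H lr \<noteq> H l2 then None else Some (mP2 - l1P2 - lr - l3P2))
     else (let lr = l3P1 in if H lr \<noteq> H l3 then None else Some (mP3 - l1P3 - l2P3 - lr)))"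

end

theory Submission
  imports Defs
begin

lemma gate_ok:
  fixes sts :: "'l::len wst list" and vs :: "'l word list"
  assumes len: "length sts = length vs"
    and sh: "\<forall>w<length vs. is_sharing (sts!w) (vs!w)"
    and g: "case g of Inp p \<Rightarrow> True | AddG i j \<Rightarrow> i < length vs \<and> j < length vs
              | MulG i j \<Rightarrow> i < length vs \<and> j < length vs"
  shows "is_sharing (fst (prot_gate r rA rB H x sts g)) (last (eval_step x vs g))
         \<and> snd (prot_gate r rA rB H x sts g) = {}"
proof (cases g)
  case (Inp p)
  then show ?thesis using len
    by (simp add: prot_gate_def eval_step_def Let_def is_sharing_def)
next
  case (AddG i j)
  with g have ij: "i < length vs" "j < length vs" by auto
  obtain a1 a2 a3 where A: "sts!i = ((a1,a2,a3),(vs!i + (a1+a2+a3),a2,a3),(vs!i + (a1+a2+a3),a3,a1),(vs!i + (a1+a2+a3),a1,a2))"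
    using sh ij unfolding is_sharing_def by blast
  obtain b1 b2 b3 where B: "sts!j = ((b1,b2,b3),(vs!j + (b1+b2+b3),b2,b3),(vs!j + (b1+b2+b3),b3,b1),(vs!j + (b1+b2+b3),b1,b2))"
    using sh ij unfolding is_sharing_def by blast
  show ?thesis using AddG A B
    by (simp add: prot_gate_def eval_step_def Let_def is_sharing_def algebra_simps)
next
  case (MulG i j)
  with g have ij: "i < length vs" "j < length vs" by auto
  obtain a1 a2 a3 where A: "sts!i = ((a1,a2,a3),(vs!i + (a1+a2+a3),a2,a3),(vs!i + (a1+a2+a3),a3,a1),(vs!i + (a1+a2+a3),a1,a2))"
    using sh ij unfolding is_sharing_def by blast
  obtain b1 b2 b3 where B: "sts!j = ((b1,b2,b3),(vs!j + (b1+b2+b3),b2,b3),(vs!j + (b1+b2+b3),b3,b1),(vs!j + (b1+b2+b3),b1,b2))"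
    using sh ij unfolding is_sharing_def by blast
  show ?thesis using MulG A B
    apply (simp add: prot_gate_def eval_step_def Let_def is_sharing_def)
    by (simp add: algebra_simps)
qed

lemma run_inv:
  fixes x :: "nat \<Rightarrow> 'l::len word"
  assumes "wf_circ C"
  shows "snd (prot_run r rA rB H x C) = {}
    \<and> length (fst (prot_run r rA rB H x C)) = length C
    \<and> length (eval_circ C x) = length C
    \<and> (\<forall>w<length C. is_sharing (fst (prot_run r rA rB H x C) ! w) (eval_circ C x ! w))"
  using assms
proof (induction C rule: rev_induct)
  case Nil
  then show ?case by (simp add: prot_run_def eval_circ_def)
next
  case (snoc g C)
  have wf: "wf_circ C" using snoc.prems unfolding wf_circ_def
    by (metis (no_types, lifting) less_SucI length_append_singleton nth_append_left)
  have gc: "case g of Inp p \<Rightarrow> True | AddG i j \<Rightarrow> i < length C \<and> j < length C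
              | MulG i j \<Rightarrow> i < length C \<and> j < length C"
    using snoc.prems unfolding wf_circ_def
    by (auto split: gate.splits dest: spec[of _ "length C"])
  obtain sts ab where R: "prot_run r rA rB H x C = (sts, ab)" by fastforce
  define vs where "vs = eval_circ C x"
  from snoc.IH[OF wf] R have I: "ab = {}" "length sts = length C" "length vs = length C"
    "\<forall>w<length C. is_sharing (sts ! w) (vs ! w)" by (auto simp: vs_def)
  obtain st ab' where G: "prot_gate r rA rB H x sts g = (st, ab')" by fastforce
  have go: "is_sharing st (last (eval_step x vs g)) \<and> ab' = {}"
  proof -
    have "case g of Inp p \<Rightarrow> True | AddG i j \<Rightarrow> i < length vs \<and> j < length vs
              | MulG i j \<Rightarrow> i < length vs \<and> j < length vs" unfolding I(3) using gc .
    from gate_ok[of sts vs g r rA rB H x, OF _ _ this] I G show ?thesis by simp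
  qed
  have R2: "prot_run r rA rB H x (C @ [g]) = (sts @ [st], ab \<union> ab')"
    using R G by (simp add: prot_run_def prot_step_def)
  have E2: "eval_circ (C @ [g]) x = eval_step x vs g"
    by (simp add: eval_circ_def vs_def)
  have ES: "eval_step x vs g = vs @ [last (eval_step x vs g)]"
    by (simp add: eval_step_def)
  show ?case
  proof (intro conjI allI impI)
    fix w assume w: "w < length (C @ [g])"
    show "is_sharing (fst (prot_run r rA rB H x (C @ [g])) ! w) (eval_circ (C @ [g]) x ! w)"
      unfolding R2 E2 apply (subst ES)
      using w I go by (cases "w < length C") (auto simp: nth_append)
  qed (use R2 E2 I go in \<open>auto simp: eval_step_def\<close>)
qed

theorem theorem1:
  fixes C :: "gate list" and x :: "nat \<Rightarrow> 'l::len word"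
    and r :: "nat \<Rightarrow> nat \<Rightarrow> 'l word" and rA rB :: "nat \<Rightarrow> 'l word"
    and H :: "'l word \<Rightarrow> 'h" and outs :: "nat set"
  assumes "wf_circ C" and "outs \<subseteq> {..<length C}"
  shows "snd (prot_run r rA rB H x C) = {}
    \<and> length (fst (prot_run r rA rB H x C)) = length C
    \<and> (\<forall>w<length C. is_sharing (fst (prot_run r rA rB H x C) ! w) (eval_circ C x ! w))
    \<and> (\<forall>v\<in>outs. \<forall>p\<le>3. prot_output H (fst (prot_run r rA rB H x C) ! v) p
                        = Some (eval_circ C x ! v))"
proof -
  note I = run_inv[OF assms(1), of r rA rB H x]
  have "prot_output H (fst (prot_run r rA rB H x C) ! v) p = Some (eval_circ C x ! v)"
    if "v \<in> outs" for v p
  proof -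
    have "v < length C" using that assms(2) by auto
    then obtain m l1 l2 l3 where "m = eval_circ C x ! v + (l1+l2+l3)"
      "fst (prot_run r rA rB H x C) ! v = ((l1, l2, l3), (m, l2, l3), (m, l3, l1), (m, l1, l2))"
      using I unfolding is_sharing_def by blast
    then show ?thesis by (simp add: prot_output_def Let_def algebra_simps)
  qed
  then show ?thesis using I by auto
qed

end
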